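(* Let $\mathcal{JS}=(\mathcal F,\mathcal F_d,R,\mathcal B)$ be a justification system. For every locally complete graph-like (respectively tree-like) justification $J$ and every internal node $n$ of $J$ with label $x=\ell(n)\in\mathcal F_d$, there exists a connected, locally complete graph-like (respectively tree-like) justification $J'$ with a node $n'$ labelled $x$ from which every node of $J'$ is reachable (so $x$ is a root of $J'$), such that $\mathrm{val}(J,n,\mathcal I)\le_t \mathrm{val}(J',n',\mathcal I)$ for all interpretations $\mathcal I$.
   Context: Let $\mathcal F$ be a set (the fact space) containing $\mathcal L=\{\mathbf t,\mathbf f,\mathbf u\}$, equipped with an involution $\sim:\mathcal F\to\mathcal F$ with $\sim\mathbf t=\mathbf f$, $\sim\mathbf u=\mathbf u$ and $\sim x\neq x$ for all $x\neq\mathbf u$; for $A\subseteq\mathcal F$ put $\sim A=\{\sim a:a\in A\}$. On $\mathcal L$ the truth order is $\mathbf f<_t\mathbf u<_t\mathbf t$; $\bigwedge$ and $\bigvee$ denote greatest lower and least upper bounds in $(\mathcal L,\le_t)$ (so $\bigvee\emptyset=\mathbf f$, $\bigwedge\emptyset=\mathbf t$); $\sim$ reverses $\le_t$ on $\mathcal L$. A justification frame is $\mathcal{JF}=(\mathcal F,\mathcal F_d,R)$ where $\mathcal F_d\subseteq\mathcal F$ (defined facts) satisfies $\sim\mathcal F_d=\mathcal F_d$ and $\mathcal F_d\cap\mathcal L=\emptyset$, and $R\subseteq\mathcal F_d\times 2^{\mathcal F}$ is a set of rules, written $x\gets A$, such that no rule has empty body and every $x\in\mathcal F_d$ is the head of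 at least one rule. $\mathcal F_o=\mathcal F\setminus\mathcal F_d$ are the open facts. A justification in $\mathcal{JF}$ is a directed graph $(N,E)$ with a labelling $\ell:N\to\mathcal F$ such that every internal node $n$ (node with at least one outgoing edge) satisfies $\ell(n)\in\mathcal F_d$ and $\ell(n)\gets\{\ell(m):(n,m)\in E\}\in R$; nodes without outgoing edges are leaves. It is graph-like if $\ell$ is injective, and tree-like if its underlying undirected graph is acyclic. It is locally complete if no leaf is labelled by a defined fact, connected if its underlying undirected graph is connected, and $x$ is a root of it if some node $n$ with $\ell(n)=x$ reaches every node. A $\mathcal{JF}$-branch is either an infinite sequence $x_0\to x_1\to\cdots$ of defined facts or a finite sequence $x_0\to\cdots\to x_k$ ($k\ge1$) with $x_0,\dots,x_{k-1}\in\mathcal F_d$ and $x_k\in\mathcal F_o$. For a node $n$ of a locally complete justification $J$, $B_J(n)$ is the set of label sequences of maximal paths of $J$ starting at $n$ (infinite, or ending in a leaf). A branch evaluation $\mathcal B$ assigns to each $\mathcal{JF}$-branch an element of $\mathcal F$. A justification system is $\mathcal{JS}=(\mathcal F,\mathcal F_d,R,\mathcal B)$. An interpretation is a map $\mathcal I:\mathcal F\to\mathcal L$ with $\mathcal I(\sim x)=\sim\mathcal I(x)$ for all $x$ and $\mathcal I(l)=l$ for $l\in\mathcal L$. The value of a node $n$ of a locally complete justification $J$ is $\mathrm{val}(J,n,\mathcal I)=\bigwedge_{b\in B_J(n)}\mathcal I(\mathcal B(b))$. *)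

theory Defs
  imports Main
begin

datatype tv = FF | UU | TT

fun tv_rank :: "tv \<Rightarrow> nat" where
  "tv_rank FF = 0" | "tv_rank UU = 1" | "tv_rank TT = 2"

definition le_t :: "tv \<Rightarrow> tv \<Rightarrow> bool" where
  "le_t a b \<longleftrightarrow> tv_rank a \<le> tv_rank b"

fun neg_tv :: "tv \<Rightarrow> tv" where
  "neg_tv TT = FF" | "neg_tv FF = TT" | "neg_tv UU = UU"

definition glb_t :: "tv set \<Rightarrow> tv" where
  "glb_t S = (if FF \<in> S then FF else if UU \<in> S then UU else TT)"

text \<open>The fact space is the universe of the type 'f; tt, ff, uu are the three
  logical facts (t, f, u); neg is the involution \<sim>; Fd the defined facts;
  R the rules (head, body).\<close>
definition jframe ::
  "('f \<Rightarrow> 'f) \<Rightarrow> 'f \<Rightarrow> 'f \<Rightarrow> 'f \<Rightarrow> 'f set \<Rightarrow> ('f \<times> 'f set) set \<Rightarrow> bool" where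
  "jframe neg tt ff uu Fd R \<longleftrightarrow>
     (\<forall>x. neg (neg x) = x) \<and> neg tt = ff \<and> neg uu = uu \<and>
     (\<forall>x. x \<noteq> uu \<longrightarrow> neg x \<noteq> x) \<and>
     neg ` Fd = Fd \<and> Fd \<inter> {tt, ff, uu} = {} \<and>
     (\<forall>x A. (x, A) \<in> R \<longrightarrow> x \<in> Fd \<and> A \<noteq> {}) \<and>
     (\<forall>x\<in>Fd. \<exists>A. (x, A) \<in> R)"

definition internal :: "('n \<times> 'n) set \<Rightarrow> 'n \<Rightarrow> bool" where
  "internal E n \<longleftrightarrow> (\<exists>m. (n, m) \<in> E)"

definition is_justification ::
  "'f set \<Rightarrow> ('f \<times> 'f set) set \<Rightarrow> 'n set \<Rightarrow> ('n \<times> 'n) set \<Rightarrow> ('n \<Rightarrow> 'f) \<Rightarrow> bool" where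
  "is_justification Fd R N E lab \<longleftrightarrow>
     E \<subseteq> N \<times> N \<and>
     (\<forall>n\<in>N. internal E n \<longrightarrow>
        lab n \<in> Fd \<and> (lab n, {lab m | m. (n, m) \<in> E}) \<in> R)"

definition graph_like :: "'n set \<Rightarrow> ('n \<Rightarrow> 'f) \<Rightarrow> bool" where
  "graph_like N lab \<longleftrightarrow> inj_on lab N"

definition uadj :: "('n \<times> 'n) set \<Rightarrow> 'n \<Rightarrow> 'n \<Rightarrow> bool" where
  "uadj E a b \<longleftrightarrow> (a, b) \<in> E \<or> (b, a) \<in> E"

text \<open>The underlying undirected (multi)graph is acyclic: no self loops, no
  pair of antiparallel edges (a cycle of length 2), and no cycle through
  k \<ge> 3 distinct nodes.\<close>
definition tree_like :: "'n set \<Rightarrow> ('n \<times> 'n) set \<Rightarrow> bool" where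
  "tree_like N E \<longleftrightarrow>
     (\<forall>a. (a, a) \<notin> E) \<and>
     (\<forall>a b. (a, b) \<in> E \<longrightarrow> (b, a) \<notin> E) \<and>
     \<not> (\<exists>vs. 3 \<le> length vs \<and> distinct vs \<and> set vs \<subseteq> N \<and>
            (\<forall>i < length vs. uadj E (vs ! i) (vs ! ((i + 1) mod length vs))))"

definition locally_complete ::
  "'f set \<Rightarrow> 'n set \<Rightarrow> ('n \<times> 'n) set \<Rightarrow> ('n \<Rightarrow> 'f) \<Rightarrow> bool" where
  "locally_complete Fd N E lab \<longleftrightarrow> (\<forall>n\<in>N. \<not> internal E n \<longrightarrow> lab n \<notin> Fd)"

definition connected_just :: "'n set \<Rightarrow> ('n \<times> 'n) set \<Rightarrow> bool" where
  "connected_just N E \<longleftrightarrow> (\<forall>a\<in>N. \<forall>b\<in>N. (a, b) \<in> (E \<union> E\<inverse>)\<^sup>*)"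

definition is_root_node :: "'n set \<Rightarrow> ('n \<times> 'n) set \<Rightarrow> 'n \<Rightarrow> bool" where
  "is_root_node N E n \<longleftrightarrow> n \<in> N \<and> (\<forall>m\<in>N. (n, m) \<in> E\<^sup>*)"

datatype 'f branch = FinBr "'f list" | InfBr "nat \<Rightarrow> 'f"

definition branches_from ::
  "('n \<times> 'n) set \<Rightarrow> ('n \<Rightarrow> 'f) \<Rightarrow> 'n \<Rightarrow> 'f branch set" where
  "branches_from E lab n =
     {FinBr (map lab ns) | ns. ns \<noteq> [] \<and> hd ns = n \<and>
        (\<forall>i. Suc i < length ns \<longrightarrow> (ns ! i, ns ! Suc i) \<in> E) \<and>
        \<not> internal E (last ns)}
     \<union> {InfBr (lab \<circ> p) | p. p 0 = n \<and> (\<forall>i. (p i, p (Suc i)) \<in> E)}"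

definition is_interp ::
  "('f \<Rightarrow> 'f) \<Rightarrow> 'f \<Rightarrow> 'f \<Rightarrow> 'f \<Rightarrow> ('f \<Rightarrow> tv) \<Rightarrow> bool" where
  "is_interp neg tt ff uu I \<longleftrightarrow>
     (\<forall>x. I (neg x) = neg_tv (I x)) \<and> I tt = TT \<and> I ff = FF \<and> I uu = UU"

text \<open>val(J, n, I) = glb of I(B(b)) over b in B_J(n); Bev is the branch evaluation.\<close>
definition val ::
  "('f branch \<Rightarrow> 'f) \<Rightarrow> ('n \<times> 'n) set \<Rightarrow> ('n \<Rightarrow> 'f) \<Rightarrow> 'n \<Rightarrow> ('f \<Rightarrow> tv) \<Rightarrow> tv" where
  "val Bev E lab n I = glb_t ((\<lambda>b. I (Bev b)) ` branches_from E lab n)"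

end

theory Submission
  imports Defs
begin

lemma restr_internal:
  assumes "(n, m) \<in> E\<^sup>*"
  shows "internal {(a,b). (a,b)\<in>E \<and> (n,a)\<in>E\<^sup>*} m \<longleftrightarrow> internal E m"
  using assms unfolding internal_def by auto

lemma restr_succ:
  assumes "(n, m) \<in> E\<^sup>*"
  shows "{lab k | k. (m,k) \<in> {(a,b). (a,b)\<in>E \<and> (n,a)\<in>E\<^sup>*}} = {lab k | k. (m,k)\<in>E}"
  using assms by auto

lemma restr_branches:
  "branches_from {(a,b). (a,b)\<in>E \<and> (n,a)\<in>E\<^sup>*} lab n = branches_from E lab n"
proof -
  let ?E = "{(a,b). (a,b)\<in>E \<and> (n,a)\<in>E\<^sup>*}"
  have fin: "(n, ns!i) \<in> E\<^sup>*" if "hd ns = n" "ns \<noteq> []"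
     "\<forall>i. Suc i < length ns \<longrightarrow> (ns ! i, ns ! Suc i) \<in> E" "i < length ns" for ns i
    using that(4)
  proof (induction i)
    case 0 then show ?case using that(1,2) by (simp add: hd_conv_nth)
  next
    case (Suc i) then show ?case using that(3)
      by (meson Suc_lessD rtrancl.rtrancl_into_rtrancl)
  qed
  have inf: "(n, p i) \<in> E\<^sup>*" if "p 0 = n" "\<forall>i. (p i, p (Suc i)) \<in> E" for p i
  proof (induction i)
    case 0 then show ?case using that by simp
  next
    case (Suc i) then show ?case using that by (meson rtrancl.rtrancl_into_rtrancl)
  qed
  have A: "(\<forall>i. Suc i < length ns \<longrightarrow> (ns ! i, ns ! Suc i) \<in> ?E) \<and> \<not> internal ?E (last ns)
        \<longleftrightarrow> (\<forall>i. Suc i < length ns \<longrightarrow> (ns ! i, ns ! Suc i) \<in> E) \<and> \<not> internal E (last ns)"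
    if "hd ns = n" "ns \<noteq> []" for ns
  proof
    assume h: "(\<forall>i. Suc i < length ns \<longrightarrow> (ns ! i, ns ! Suc i) \<in> ?E) \<and> \<not> internal ?E (last ns)"
    then have h1: "\<forall>i. Suc i < length ns \<longrightarrow> (ns ! i, ns ! Suc i) \<in> E" by auto
    have "(n, last ns) \<in> E\<^sup>*" using fin[OF that h1, of "length ns - 1"] that(2)
      by (simp add: last_conv_nth)
    note r = this
    show "(\<forall>i. Suc i < length ns \<longrightarrow> (ns ! i, ns ! Suc i) \<in> E) \<and> \<not> internal E (last ns)"
      using h h1 restr_internal[OF r] by simp
  next
    assume h: "(\<forall>i. Suc i < length ns \<longrightarrow> (ns ! i, ns ! Suc i) \<in> E) \<and> \<not> internal E (last ns)"
    have "(n, last ns) \<in> E\<^sup>*" using fin[OF that, of "length ns - 1"] h that(2)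
      by (simp add: last_conv_nth)
    moreover have "\<forall>i. Suc i < length ns \<longrightarrow> (ns ! i, ns ! Suc i) \<in> ?E"
      using fin[OF that] h by auto
    ultimately show "(\<forall>i. Suc i < length ns \<longrightarrow> (ns ! i, ns ! Suc i) \<in> ?E) \<and> \<not> internal ?E (last ns)"
      using h restr_internal[of n "last ns" E] by simp
  qed
  have B: "(\<forall>i. (p i, p (Suc i)) \<in> ?E) \<longleftrightarrow> (\<forall>i. (p i, p (Suc i)) \<in> E)" if "p 0 = n" for p
    using inf[of p, OF that] by auto
  have C1: "{FinBr (map lab ns) | ns. ns \<noteq> [] \<and> hd ns = n \<and>
        (\<forall>i. Suc i < length ns \<longrightarrow> (ns ! i, ns ! Suc i) \<in> ?E) \<and> \<not> internal ?E (last ns)}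
     = {FinBr (map lab ns) | ns. ns \<noteq> [] \<and> hd ns = n \<and>
        (\<forall>i. Suc i < length ns \<longrightarrow> (ns ! i, ns ! Suc i) \<in> E) \<and> \<not> internal E (last ns)}"
  proof (rule Collect_cong)
    fix x
    show "(\<exists>ns. x = FinBr (map lab ns) \<and> ns \<noteq> [] \<and> hd ns = n \<and>
        (\<forall>i. Suc i < length ns \<longrightarrow> (ns ! i, ns ! Suc i) \<in> ?E) \<and> \<not> internal ?E (last ns)) =
      (\<exists>ns. x = FinBr (map lab ns) \<and> ns \<noteq> [] \<and> hd ns = n \<and>
        (\<forall>i. Suc i < length ns \<longrightarrow> (ns ! i, ns ! Suc i) \<in> E) \<and> \<not> internal E (last ns))"
      apply (rule ex_cong1)
      subgoal for ns using A[of ns] by (cases "ns \<noteq> [] \<and> hd ns = n") auto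
      done
  qed
  have C2: "{InfBr (lab \<circ> p) | p. p 0 = n \<and> (\<forall>i. (p i, p (Suc i)) \<in> ?E)}
     = {InfBr (lab \<circ> p) | p. p 0 = n \<and> (\<forall>i. (p i, p (Suc i)) \<in> E)}"
  proof (rule Collect_cong)
    fix x
    show "(\<exists>p. x = InfBr (lab \<circ> p) \<and> p 0 = n \<and> (\<forall>i. (p i, p (Suc i)) \<in> ?E)) =
       (\<exists>p. x = InfBr (lab \<circ> p) \<and> p 0 = n \<and> (\<forall>i. (p i, p (Suc i)) \<in> E))"
      apply (rule ex_cong1)
      subgoal for p using B[of p] by (cases "p 0 = n") auto
      done
  qed
  show ?thesis unfolding branches_from_def C1 C2 ..
qed

lemma restr_main:
  assumes "is_justification Fd R N E lab" "locally_complete Fd N E lab" "n \<in> N"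
  defines "N' \<equiv> {m. (n,m) \<in> E\<^sup>*}" and "E' \<equiv> {(a,b). (a,b)\<in>E \<and> (n,a)\<in>E\<^sup>*}"
  shows "is_justification Fd R N' E' lab" "locally_complete Fd N' E' lab"
    "N' \<subseteq> N" "E' \<subseteq> E" "connected_just N' E'" "is_root_node N' E' n"
    "branches_from E' lab n = branches_from E lab n"
proof -
  have EN: "E \<subseteq> N \<times> N" using assms(1) unfolding is_justification_def by auto
  show sub: "N' \<subseteq> N"
  proof
    fix m assume "m \<in> N'"
    then have "(n,m) \<in> E\<^sup>*" by (simp add: N'_def)
    then show "m \<in> N" using assms(3) EN by (induction rule: rtrancl_induct) auto
  qed
  show "E' \<subseteq> E" by (auto simp: E'_def)
  have E'N: "E' \<subseteq> N' \<times> N'" by (auto simp: E'_def N'_def)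
  show "is_justification Fd R N' E' lab"
    unfolding is_justification_def
  proof (rule conjI[OF E'N], intro ballI impI)
    fix m assume m: "m \<in> N'" "internal E' m"
    then have r: "(n,m) \<in> E\<^sup>*" by (simp add: N'_def)
    then have "internal E m" using m restr_internal[OF r] unfolding E'_def by simp
    then have "lab m \<in> Fd \<and> (lab m, {lab k |k. (m, k) \<in> E}) \<in> R"
      using assms(1) m sub unfolding is_justification_def by auto
    then show "lab m \<in> Fd \<and> (lab m, {lab k |k. (m, k) \<in> E'}) \<in> R"
      using restr_succ[OF r, of lab] unfolding E'_def by simp
  qed
  show "locally_complete Fd N' E' lab"
    unfolding locally_complete_def
  proof (intro ballI impI)
    fix m assume m: "m \<in> N'" "\<not> internal E' m"
    then have r: "(n,m) \<in> E\<^sup>*" by (simp add: N'_def)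
    then have "\<not> internal E m" using m restr_internal[OF r] unfolding E'_def by simp
    then show "lab m \<notin> Fd" using assms(2) m sub unfolding locally_complete_def by auto
  qed
  have reach: "(n, m) \<in> E'\<^sup>*" if "m \<in> N'" for m
  proof -
    have "(n,m) \<in> E\<^sup>*" using that by (simp add: N'_def)
    then show ?thesis
    proof (induction rule: rtrancl_induct)
      case base then show ?case by simp
    next
      case (step y z)
      then have "(y,z) \<in> E'" by (auto simp: E'_def)
      then show ?case using step by (meson rtrancl.rtrancl_into_rtrancl)
    qed
  qed
  show "is_root_node N' E' n" unfolding is_root_node_def using reach by (auto simp: N'_def)
  show "connected_just N' E'" unfolding connected_just_def
  proof (intro ballI)
    fix a b assume "a \<in> N'" "b \<in> N'"
    then have "(n,a) \<in> E'\<^sup>*" "(n,b) \<in> E'\<^sup>*" using reach by auto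
    then have "(a,n) \<in> (E' \<union> E'\<inverse>)\<^sup>*" "(n,b) \<in> (E' \<union> E'\<inverse>)\<^sup>*"
    proof -
      have s1: "E'\<^sup>* \<subseteq> (E' \<union> E'\<inverse>)\<^sup>*" by (rule rtrancl_mono) blast
      have s2: "(E'\<inverse>)\<^sup>* \<subseteq> (E' \<union> E'\<inverse>)\<^sup>*" by (rule rtrancl_mono) blast
      show "(a,n) \<in> (E' \<union> E'\<inverse>)\<^sup>*" using s2 \<open>(n,a) \<in> E'\<^sup>*\<close>
        by (simp add: rtrancl_converse subset_iff)
      show "(n,b) \<in> (E' \<union> E'\<inverse>)\<^sup>*" using s1 \<open>(n,b) \<in> E'\<^sup>*\<close> by blast
    qed
    then show "(a, b) \<in> (E' \<union> E'\<inverse>)\<^sup>*" by (meson rtrancl_trans)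
  qed
  show "branches_from E' lab n = branches_from E lab n" unfolding E'_def by (rule restr_branches)
qed

theorem mainTheorem1:
  fixes neg :: "'f \<Rightarrow> 'f" and tt ff uu :: 'f and Fd :: "'f set"
    and R :: "('f \<times> 'f set) set" and Bev :: "'f branch \<Rightarrow> 'f"
    and N :: "'n set" and E :: "('n \<times> 'n) set" and lab :: "'n \<Rightarrow> 'f" and n :: 'n
  assumes "jframe neg tt ff uu Fd R"
    and "is_justification Fd R N E lab"
    and "locally_complete Fd N E lab"
    and "n \<in> N" and "internal E n"
  shows "(graph_like N lab \<longrightarrow>
           (\<exists>(N' :: 'n set) E' lab' n'. is_justification Fd R N' E' lab' \<and>
              locally_complete Fd N' E' lab' \<and> graph_like N' lab' \<and>
              connected_just N' E' \<and> is_root_node N' E' n' \<and> lab' n' = lab n \<and>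
              (\<forall>I. is_interp neg tt ff uu I \<longrightarrow>
                    le_t (val Bev E lab n I) (val Bev E' lab' n' I))))
       \<and> (tree_like N E \<longrightarrow>
           (\<exists>(N' :: 'n set) E' lab' n'. is_justification Fd R N' E' lab' \<and>
              locally_complete Fd N' E' lab' \<and> tree_like N' E' \<and>
              connected_just N' E' \<and> is_root_node N' E' n' \<and> lab' n' = lab n \<and>
              (\<forall>I. is_interp neg tt ff uu I \<longrightarrow>
                    le_t (val Bev E lab n I) (val Bev E' lab' n' I))))"
proof -
  let ?N' = "{m. (n,m) \<in> E\<^sup>*}"
  let ?E' = "{(a,b). (a,b)\<in>E \<and> (n,a)\<in>E\<^sup>*}"
  note R = restr_main[OF assms(2,3,4)]
  have n': "n \<in> ?N'" by simp
  have tl: "tree_like ?N' ?E'" if "tree_like N E"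
  proof -
    have sub: "?E' \<subseteq> E" "?N' \<subseteq> N" using R(3,4) by auto
    have u: "uadj ?E' a b \<Longrightarrow> uadj E a b" for a b using sub unfolding uadj_def by blast
    have t: "(\<forall>a. (a, a) \<notin> E)" "(\<forall>a b. (a, b) \<in> E \<longrightarrow> (b, a) \<notin> E)"
      "\<not> (\<exists>vs. 3 \<le> length vs \<and> distinct vs \<and> set vs \<subseteq> N \<and>
            (\<forall>i < length vs. uadj E (vs ! i) (vs ! ((i + 1) mod length vs))))"
      using that unfolding tree_like_def by auto
    have c: "\<not> (\<exists>vs. 3 \<le> length vs \<and> distinct vs \<and> set vs \<subseteq> ?N' \<and>
            (\<forall>i < length vs. uadj ?E' (vs ! i) (vs ! ((i + 1) mod length vs))))"
    proof
      assume "\<exists>vs. 3 \<le> length vs \<and> distinct vs \<and> set vs \<subseteq> ?N' \<and>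
            (\<forall>i < length vs. uadj ?E' (vs ! i) (vs ! ((i + 1) mod length vs)))"
      then obtain vs where "3 \<le> length vs" "distinct vs" "set vs \<subseteq> ?N'"
            "\<forall>i < length vs. uadj ?E' (vs ! i) (vs ! ((i + 1) mod length vs))" by blast
      then have "3 \<le> length vs \<and> distinct vs \<and> set vs \<subseteq> N \<and>
            (\<forall>i < length vs. uadj E (vs ! i) (vs ! ((i + 1) mod length vs)))"
        using sub(2) u by blast
      then show False using t(3) by blast
    qed
    show ?thesis unfolding tree_like_def using t(1,2) c sub(1) by blast
  qed
  have gl: "graph_like ?N' lab" if "graph_like N lab"
    using that R(3) unfolding graph_like_def by (meson inj_on_subset)
  have v: "val Bev ?E' lab n I = val Bev E lab n I" for I
    unfolding val_def R(7) ..
  have le: "le_t a a" for a unfolding le_t_def by simp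
  show ?thesis
  proof (intro conjI impI)
    assume "graph_like N lab"
    then show "\<exists>(N' :: 'n set) E' lab' n'. is_justification Fd R N' E' lab' \<and>
              locally_complete Fd N' E' lab' \<and> graph_like N' lab' \<and>
              connected_just N' E' \<and> is_root_node N' E' n' \<and> lab' n' = lab n \<and>
              (\<forall>I. is_interp neg tt ff uu I \<longrightarrow>
                    le_t (val Bev E lab n I) (val Bev E' lab' n' I))"
      apply (rule_tac x="?N'" in exI, rule_tac x="?E'" in exI, rule_tac x=lab in exI, rule_tac x=n in exI)
      using R(1,2,5,6) gl v le by simp
  next
    assume "tree_like N E"
    then show "\<exists>(N' :: 'n set) E' lab' n'. is_justification Fd R N' E' lab' \<and>
              locally_complete Fd N' E' lab' \<and> tree_like N' E' \<and>
              connected_just N' E' \<and> is_root_node N' E' n' \<and> lab' n' = lab n \<and>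
              (\<forall>I. is_interp neg tt ff uu I \<longrightarrow>
                    le_t (val Bev E lab n I) (val Bev E' lab' n' I))"
      apply (rule_tac x="?N'" in exI, rule_tac x="?E'" in exI, rule_tac x=lab in exI, rule_tac x=n in exI)
      using R(1,2,5,6) tl v le by simp
  qed
qed

end
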